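(* Let $q$ be a prime number and $l$ a positive integer. Then $\dfrac{1}{q^{s-1}}\in\mathbb{Q}\text{-}\mathcal{KS}(q^{l})$ for every positive integer $s$ dividing $l-1$.
   Context: Every nonzero rational $\alpha$ is written $\alpha=\alpha_1/\alpha_2$ with $\alpha_1\in\mathbb{Z}$, $\alpha_2$ a positive integer and $\gcd(\alpha_1,\alpha_2)=1$. For an integer $N\ge 2$ and a nonzero rational $\alpha=\alpha_1/\alpha_2$, $N$ is called an $\alpha$-Korselt number if $N\neq\alpha$ and $\alpha_2p-\alpha_1$ divides $\alpha_2N-\alpha_1$ (in $\mathbb{Z}$) for every prime divisor $p$ of $N$. $\mathbb{Q}\text{-}\mathcal{KS}(N)$ is the set of all $\beta\in\mathbb{Q}\setminus\{0,N\}$ such that $N$ is a $\beta$-Korselt number. *)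

theory Defs
  imports Complex_Main "HOL-Computational_Algebra.Primes"
begin

text \<open>A nonzero rational alpha is written alpha1/alpha2 in lowest terms with alpha2 > 0;
  this is exactly quotient_of alpha.\<close>

definition alpha_korselt :: "rat \<Rightarrow> nat \<Rightarrow> bool" where
  "alpha_korselt \<alpha> N \<longleftrightarrow>
     N \<ge> 2 \<and> \<alpha> \<noteq> 0 \<and> \<alpha> \<noteq> of_nat N \<and>
     (let (a1, a2) = quotient_of \<alpha> in
        \<forall>p. prime p \<and> p dvd N \<longrightarrow> (a2 * int p - a1) dvd (a2 * int N - a1))"

definition Q_KS :: "nat \<Rightarrow> rat set" where
  "Q_KS N = {\<beta>. \<beta> \<noteq> 0 \<and> \<beta> \<noteq> of_nat N \<and> alpha_korselt \<beta> N}"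

end

theory Submission
  imports Defs
begin

lemma pow_sub1_dvd: "((x::int) - 1) dvd (x ^ k - 1)"
proof (induction k)
  case 0 then show ?case by simp
next
  case (Suc k)
  have "x ^ Suc k - 1 = x * (x ^ k - 1) + (x - 1)" by (simp add: algebra_simps)
  then show ?case using Suc.IH by (simp only:) (intro dvd_add dvd_mult dvd_refl)
qed

lemma quot: "quotient_of (1 / (of_nat q :: rat) ^ m) = (1, int q ^ m)" if "q > 0"
proof -
  have "1 / (of_nat q :: rat) ^ m = Fract 1 (int q ^ m)"
    by (simp add: Fract_of_int_quotient)
  moreover have "quotient_of (Fract 1 (int q ^ m)) = (1, int q ^ m)"
    using that by (simp add: quotient_of_Fract normalize_def)
  ultimately show ?thesis by simp
qed

theorem proposition5p1:
  fixes q l s :: nat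
  assumes "prime q" and "l > 0" and "s > 0" and "s dvd (l - 1)"
  shows "1 / (of_nat q) ^ (s - 1) \<in> Q_KS (q ^ l)"
proof -
  have q2: "q \<ge> 2" using assms(1) prime_ge_2_nat by blast
  have N2: "q ^ l \<ge> 2"
    using q2 assms(2) self_le_power[of q l] by linarith 
  have ne0: "(1 / (of_nat q) ^ (s - 1) :: rat) \<noteq> 0" using q2 by simp
  have le1: "(1 / (of_nat q) ^ (s - 1) :: rat) \<le> 1" using q2 by simp
  have "(of_nat (q ^ l) :: rat) \<ge> 2" using N2
    by (metis of_nat_le_iff of_nat_numeral)
  then have neN: "(1 / (of_nat q) ^ (s - 1) :: rat) \<noteq> of_nat (q ^ l)" using le1 by linarith
  obtain k where k: "l - 1 = s * k" using assms(4) by blast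
  have e: "s - 1 + l = s * (k + 1)" using k assms(2,3) by (simp add: algebra_simps)
  have dv: "(int q ^ (s - 1) * int p - 1) dvd (int q ^ (s - 1) * int (q ^ l) - 1)"
    if "prime p" "p dvd q ^ l" for p
  proof -
    have "p = q" using primes_dvd_imp_eq[OF that(1) assms(1) prime_dvd_power[OF that]] .
    have a: "int q ^ (s - 1) * int q = int q ^ s" using assms(3)
      by (simp add: power_Suc2[symmetric])
    have b: "int q ^ (s - 1) * int (q ^ l) = (int q ^ s) ^ (k + 1)"
    proof -
      have "int q ^ (s - 1) * int (q ^ l) = int q ^ (s - 1 + l)" by (simp add: power_add)
      also have "\<dots> = (int q ^ s) ^ (k + 1)" by (simp only: e power_mult)
      finally show ?thesis .
    qed
    show ?thesis unfolding \<open>p = q\<close> a b by (rule pow_sub1_dvd)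
  qed
  show ?thesis
    unfolding Q_KS_def alpha_korselt_def using ne0 neN N2 dv quot[of q "s - 1"] q2
    by auto
qed

end
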